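(* Let $J$ be a quadratic Jordan algebra over an infinite field $F$ that satisfies the identity $x^n=0$, $n\ge2$. Then: (1) for every $a\in J$, the elements $a^{n+1},a^{n+2},\dots,a^{2n-1}$ are absolute zero divisors of $J$; (2) if $J$ satisfies the identities $x^n=x^{n+1}=\dots=x^{2n-1}=0$, then for every $a\in J$ the element $a^{n-1}$ is an absolute zero divisor of $J$.
   Context: A quadratic Jordan algebra over $F$ is a vector space $J$ with quadratic maps $x\mapsto x^2$ and $Q:J\to\operatorname{End}_F(J)$ (operators on the right), with $x\circ y=(x+y)^2-x^2-y^2$, $\{x,y,z\}=y(Q(x+z)-Q(x)-Q(z))$, satisfying (M1) $\{x,x,y\}=x^2\circ y$; (M2) $(yQ(x))\circ x=(y\circ x)Q(x)$; (M3) $x^2Q(x)=(x^2)^2$; (M4) $x^2Q(y)Q(x)=(yQ(x))^2$; (M5) $Q(x^2)=Q(x)^2$; (M6) $Q(yQ(x))=Q(x)Q(y)Q(x)$ and all their partial linearizations. Powers: $x^1=x$, $x^{2k}=(x^k)^2$, $x^{2k+1}=xQ(x^k)$. Here an element $a$ is called an absolute zero divisor if $Q(a)=0$. *)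

theory Defs
  imports Complex_Main
begin

text \<open>A quadratic Jordan algebra over a field of scalars of type 'k, carried by a type 'a.
  scale is the scalar multiplication, sq x is x^2, and Q x y is y Q(x)
  (operators act on the right).\<close>

definition jcirc :: "('a::ab_group_add \<Rightarrow> 'a) \<Rightarrow> 'a \<Rightarrow> 'a \<Rightarrow> 'a" where
  "jcirc sq x y = sq (x + y) - sq x - sq y"

definition jtriple :: "('a::ab_group_add \<Rightarrow> 'a \<Rightarrow> 'a) \<Rightarrow> 'a \<Rightarrow> 'a \<Rightarrow> 'a \<Rightarrow> 'a" where
  "jtriple Q x y z = Q (x + z) y - Q x y - Q z y"

definition quadratic_map :: "('k::field \<Rightarrow> 'a::ab_group_add \<Rightarrow> 'a) \<Rightarrow> ('k \<Rightarrow> 'b::ab_group_add \<Rightarrow> 'b)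
    \<Rightarrow> ('a \<Rightarrow> 'b) \<Rightarrow> bool" where
  "quadratic_map sa sb q \<longleftrightarrow>
     (\<forall>c x. q (sa c x) = sb (c * c) (q x)) \<and>
     (\<forall>x. Vector_Spaces.linear sa sb (\<lambda>y. q (x + y) - q x - q y)) \<and>
     (\<forall>y. Vector_Spaces.linear sa sb (\<lambda>x. q (x + y) - q x - q y))"

definition quad_jordan :: "('k::field \<Rightarrow> 'a::ab_group_add \<Rightarrow> 'a) \<Rightarrow> ('a \<Rightarrow> 'a) \<Rightarrow> ('a \<Rightarrow> 'a \<Rightarrow> 'a) \<Rightarrow> bool" where
  "quad_jordan scale sq Q \<longleftrightarrow>
     vector_space scale \<and>
     quadratic_map scale scale sq \<and>
     (\<forall>x. Vector_Spaces.linear scale scale (Q x)) \<and>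
     (\<forall>y. quadratic_map scale scale (\<lambda>x. Q x y)) \<and>
     (\<forall>x y. jtriple Q x x y = jcirc sq (sq x) y) \<and>                        \<comment> \<open>M1\<close>
     (\<forall>x y. jcirc sq (Q x y) x = Q x (jcirc sq y x)) \<and>                    \<comment> \<open>M2\<close>
     (\<forall>x. Q x (sq x) = sq (sq x)) \<and>                                       \<comment> \<open>M3\<close>
     (\<forall>x y. Q x (Q y (sq x)) = sq (Q x y)) \<and>                              \<comment> \<open>M4\<close>
     (\<forall>x z. Q (sq x) z = Q x (Q x z)) \<and>                                   \<comment> \<open>M5\<close>
     (\<forall>x y z. Q (Q x y) z = Q x (Q y (Q x z)))                             \<comment> \<open>M6\<close>"

text \<open>Powers: x^1 = x, x^(2k) = (x^k)^2, x^(2k+1) = x Q(x^k). (x^0 is a dummy value.)\<close>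

fun jpow :: "('a \<Rightarrow> 'a) \<Rightarrow> ('a \<Rightarrow> 'a \<Rightarrow> 'a) \<Rightarrow> nat \<Rightarrow> 'a \<Rightarrow> 'a" where
  "jpow sq Q n x =
     (if n \<le> 1 then x
      else if even n then sq (jpow sq Q (n div 2) x)
      else Q (jpow sq Q (n div 2) x) x)"

definition abs_zero_divisor :: "('a::zero \<Rightarrow> 'a \<Rightarrow> 'a) \<Rightarrow> 'a \<Rightarrow> bool" where
  "abs_zero_divisor Q a \<longleftrightarrow> Q a = (\<lambda>_. 0)"

end

theory Submission
  imports Defs
begin

definition lin :: "('k::field \<Rightarrow> 'a::ab_group_add \<Rightarrow> 'a) \<Rightarrow> ('a \<Rightarrow> 'a) \<Rightarrow> bool" where
  "lin sc L \<longleftrightarrow> (\<forall>x y. L (x + y) = L x + L y) \<and> (\<forall>c x. L (sc c x) = sc c (L x))"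

definition bilin :: "('k::field \<Rightarrow> 'a::ab_group_add \<Rightarrow> 'a) \<Rightarrow> ('a \<Rightarrow> 'a \<Rightarrow> 'a) \<Rightarrow> bool" where
  "bilin sc op \<longleftrightarrow> (\<forall>x. lin sc (op x)) \<and> (\<forall>y. lin sc (\<lambda>x. op x y))"


fun Lc :: "('a::ab_group_add \<Rightarrow> 'a) \<Rightarrow> ('a \<Rightarrow> 'a) \<Rightarrow> nat \<Rightarrow> 'a \<Rightarrow> 'a" where
  "Lc V U 0 z = z + z"
| "Lc V U (Suc 0) z = V z"
| "Lc V U (Suc (Suc m)) z = Lc V U (Suc m) (V z) - U (Lc V U m z)"

declare Lc.simps(3)[simp del]
lemmas Lc_SS = Lc.simps(3)

lemma induct2: "P 0 \<Longrightarrow> P (Suc 0) \<Longrightarrow> (\<And>m. P m \<Longrightarrow> P (Suc m) \<Longrightarrow> P (Suc (Suc m))) \<Longrightarrow> P n"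
proof (induction n rule: less_induct)
  case (less n)
  then show ?case by (cases n; cases "n - 1") (auto simp: less_Suc_eq)
qed

definition addh :: "('a::ab_group_add \<Rightarrow> 'a) \<Rightarrow> bool" where
  "addh f \<longleftrightarrow> (\<forall>a b. f (a + b) = f a + f b)"

lemma addh_diff: "addh f \<Longrightarrow> f (a - b) = f a - f b"
proof -
  assume f: "addh f"
  have "f (a - b) + f b = f a" using f unfolding addh_def by (metis diff_add_cancel)
  then show ?thesis by (simp add: eq_diff_eq)
qed

lemma addh_pow: "addh U \<Longrightarrow> addh (U ^^ j)"
  by (induction j) (simp_all add: addh_def)

context
  fixes V U :: "'a::ab_group_add \<Rightarrow> 'a"
  assumes aV: "addh V" and aU: "addh U" and VU: "\<And>z. V (U z) = U (V z)"
begin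

lemma Lc_add: "Lc V U m (a + b) = Lc V U m a + Lc V U m b"
proof (induction m arbitrary: a b rule: induct2)
  case 1 then show ?case by simp
next
  case 2 then show ?case using aV by (simp add: addh_def)
next
  case (3 m)
  then show ?case using aV aU by (simp add: addh_def Lc_SS)
qed

lemma addh_Lc: "addh (Lc V U m)" using Lc_add addh_def by blast

lemma Lc_V: "Lc V U m (V z) = V (Lc V U m z)"
proof (induction m arbitrary: z rule: induct2)
  case 1 then show ?case using aV by (simp add: addh_def)
next
  case 2 then show ?case by simp
next
  case (3 m)
  then show ?case using aV VU by (simp add: addh_diff Lc_SS)
qed

lemma Lc_U: "Lc V U m (U z) = U (Lc V U m z)"
proof (induction m arbitrary: z rule: induct2)
  case 1 then show ?case using aU by (simp add: addh_def)
next
  case 2 then show ?case using VU by simp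
next
  case (3 m)
  then show ?case using aU VU by (simp add: addh_diff Lc_SS)
qed

lemma Lc_Upow: "Lc V U m ((U ^^ j) z) = (U ^^ j) (Lc V U m z)"
  by (induction j) (simp_all add: Lc_U)

lemma Lucas: "Lc V U (b + m) (Lc V U b z) = Lc V U (2*b + m) z + (U ^^ b) (Lc V U m z)"
proof (induction b arbitrary: m z rule: less_induct)
  case (less b)
  show ?case
  proof (cases b)
    case 0 then show ?thesis using Lc_add by simp
  next
    case (Suc b1)
    show ?thesis
    proof (cases b1)
      case 0
      then show ?thesis using Suc Lc_SS[of V U m z] by (simp add: algebra_simps)
    next
      case (Suc b2)
      have bb: "b = Suc (Suc b2)" using Suc \<open>b = Suc b1\<close> by simp
      have "Lc V U b z = Lc V U (Suc b2) (V z) - U (Lc V U b2 z)" using bb by (simp add: Lc_SS)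
      then have "Lc V U (b + m) (Lc V U b z) = Lc V U (b + m) (Lc V U (Suc b2) (V z)) - Lc V U (b + m) (U (Lc V U b2 z))"
        using addh_diff[OF addh_Lc] by simp
      also have "Lc V U (b + m) (Lc V U (Suc b2) (V z)) = Lc V U (Suc b2 + (m+1)) (Lc V U (Suc b2) (V z))"
        using bb by simp
      also have "\<dots> = Lc V U (2*Suc b2 + (m+1)) (V z) + (U ^^ Suc b2) (Lc V U (m+1) (V z))"
        using less.IH[of "Suc b2" "m+1" "V z"] bb by simp
      also have "Lc V U (b + m) (U (Lc V U b2 z)) = U (Lc V U (b2 + (m+2)) (Lc V U b2 z))"
        using bb Lc_U by simp
      also have "\<dots> = U (Lc V U (2*b2 + (m+2)) z + (U ^^ b2) (Lc V U (m+2) z))"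
        using less.IH[of b2 "m+2" z] bb by simp
      finally have e: "Lc V U (b + m) (Lc V U b z) =
          Lc V U (2*Suc b2 + (m+1)) (V z) + (U ^^ Suc b2) (Lc V U (m+1) (V z))
          - U (Lc V U (2*b2 + (m+2)) z + (U ^^ b2) (Lc V U (m+2) z))" .
      have ee: "2*b + m = Suc (Suc (2*Suc b2 + m))" using bb by simp
      have ee2: "Suc (2*Suc b2 + m) = 2*Suc b2 + (m+1)" "2*Suc b2 + m = 2*b2 + (m+2)" by simp_all
      have d1: "Lc V U (2*b + m) z = Lc V U (2*Suc b2 + (m+1)) (V z) - U (Lc V U (2*b2 + (m+2)) z)"
        unfolding ee Lc_SS unfolding ee2(1) unfolding ee2(2) ..
      have d2: "Lc V U (m+2) z = Lc V U (m+1) (V z) - U (Lc V U m z)" using Lc_SS[of V U m z] by simp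
      have h3: "U (Lc V U (2*b2 + (m+2)) z + (U ^^ b2) (Lc V U (m+2) z))
          = U (Lc V U (2*b2 + (m+2)) z) + (U ^^ Suc b2) (Lc V U (m+1) (V z)) - (U ^^ b) (Lc V U m z)"
        using aU addh_pow[OF aU] bb d2
        by (simp add: addh_def addh_diff[OF aU] addh_diff[OF addh_pow[OF aU]] funpow_Suc_right funpow_swap1)
      show ?thesis by (simp only: e h3 d1) (simp add: algebra_simps)
    qed
  qed
qed

end

declare jpow.simps[simp del]

locale qja = vector_space scale for scale :: "'k::field \<Rightarrow> 'a::ab_group_add \<Rightarrow> 'a" +
  fixes sq :: "'a \<Rightarrow> 'a" and Q :: "'a \<Rightarrow> 'a \<Rightarrow> 'a"
  assumes sq_scale: "sq (scale c x) = scale (c*c) (sq x)"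
  and circ_add: "jcirc sq (x+y) z = jcirc sq x z + jcirc sq y z"
  and circ_scale: "jcirc sq (scale c x) z = scale c (jcirc sq x z)"
  and Q_add: "Q x (y + z) = Q x y + Q x z"
  and Q_scaleR: "Q x (scale c y) = scale c (Q x y)"
  and Q_scaleL: "Q (scale c x) y = scale (c*c) (Q x y)"
  and T_add: "jtriple Q (x+y) m z = jtriple Q x m z + jtriple Q y m z"
  and T_scale: "jtriple Q (scale c x) m z = scale c (jtriple Q x m z)"
  and M1: "jtriple Q x x y = jcirc sq (sq x) y"
  and M2: "jcirc sq (Q x y) x = Q x (jcirc sq y x)"
  and M3: "Q x (sq x) = sq (sq x)"
  and M4: "Q x (Q y (sq x)) = sq (Q x y)"
  and M5: "Q (sq x) z = Q x (Q x z)"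
  and M6: "Q (Q x y) z = Q x (Q y (Q x z))"
  and inf: "infinite (UNIV :: 'k set)"
begin

abbreviation circ where "circ x y \<equiv> jcirc sq x y"
abbreviation T where "T x m z \<equiv> jtriple Q x m z"

lemma circ_comm: "circ x y = circ y x"
  by (simp add: jcirc_def add.commute)
lemma T_comm: "T x m z = T z m x"
  by (simp add: jtriple_def add.commute)
lemma circ_add2: "circ z (x+y) = circ z x + circ z y"
  by (metis circ_add circ_comm)
lemma circ_scale2: "circ y (scale c x) = scale c (circ y x)"
  by (metis circ_scale circ_comm)
lemma T_add3: "T z m (x+y) = T z m x + T z m y"
  by (metis T_add T_comm)
lemma T_scale3: "T z m (scale c x) = scale c (T z m x)"
  by (metis T_scale T_comm)
lemma T_add2: "T x (m+m') z = T x m z + T x m' z"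
  by (simp add: jtriple_def Q_add algebra_simps)
lemma T_scale2: "T x (scale c m) z = scale c (T x m z)"
  by (simp add: jtriple_def Q_scaleR scale_right_diff_distrib)

lemma Q_zeroR[simp]: "Q x 0 = 0" using Q_scaleR[of x 0 0] by simp
lemma Q_zeroL[simp]: "Q 0 y = 0" using Q_scaleL[of 0 0 y] by simp
lemma sq_zero[simp]: "sq 0 = 0" using sq_scale[of 0 0] by simp
lemma circ_zeroL[simp]: "circ 0 y = 0" using circ_scale[of 0 0 y] by simp
lemma circ_zeroR[simp]: "circ y 0 = 0" using circ_comm circ_zeroL by metis
lemma T_zero1[simp]: "T 0 m z = 0" using T_scale[of 0 0 m z] by simp
lemma T_zero3[simp]: "T z m 0 = 0" using T_comm T_zero1 by metis
lemma T_zero2[simp]: "T z 0 x = 0" by (simp add: jtriple_def)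

lemma Q_sum: "Q (x + y) m = Q x m + Q y m + T x m y"
  by (simp add: jtriple_def)
lemma sq_sum: "sq (x + y) = sq x + sq y + circ x y"
  by (simp add: jcirc_def)

lemma lin_Q: "lin scale (Q x)" by (simp add: lin_def Q_add Q_scaleR)
lemma bilin_circ: "bilin scale circ"
  by (simp add: bilin_def lin_def circ_add circ_add2 circ_scale circ_scale2)
lemma bilin_T: "bilin scale (\<lambda>m z. T x m z)"
  by (simp add: bilin_def lin_def T_add2 T_add3 T_scale2 T_scale3)
lemma bilin_T13: "bilin scale (\<lambda>x z. T x m z)"
  by (simp add: bilin_def lin_def T_add T_add3 T_scale T_scale3)


definition pev :: "(nat \<times> 'a) list \<Rightarrow> 'k \<Rightarrow> 'a" where
  "pev ps c = sum_list (map (\<lambda>(k,v). scale (c^k) v) ps)"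

definition polyf :: "('k \<Rightarrow> 'a) \<Rightarrow> bool" where
  "polyf f \<longleftrightarrow> (\<exists>ps. f = pev ps)"

lemma pev_Nil[simp]: "pev [] c = 0" by (simp add: pev_def)
lemma pev_Cons[simp]: "pev ((k,v)#ps) c = scale (c^k) v + pev ps c" by (simp add: pev_def)
lemma pev_append[simp]: "pev (ps @ qs) c = pev ps c + pev qs c" by (simp add: pev_def)

lemma lin_zero: "lin scale L \<Longrightarrow> L 0 = 0"
  unfolding lin_def using scale_zero_left by (metis (no_types))
lemma lin_add: "lin scale L \<Longrightarrow> L (x + y) = L x + L y"
  unfolding lin_def by blast
lemma lin_scale: "lin scale L \<Longrightarrow> L (scale c x) = scale c (L x)"
  unfolding lin_def by blast

lemma lin_pev: "lin scale L \<Longrightarrow> L (pev ps c) = pev (map (\<lambda>(k,v). (k, L v)) ps) c"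
  by (induction ps) (auto simp: lin_zero lin_add lin_scale)

lemma polyf_lin: "lin scale L \<Longrightarrow> polyf f \<Longrightarrow> polyf (\<lambda>c. L (f c))"
  unfolding polyf_def using lin_pev by fastforce

lemma polyf_pev: "polyf (pev ps)" unfolding polyf_def by blast

lemma polyf_const: "polyf (\<lambda>c. a)"
proof -
  have "(\<lambda>c. a) = pev [(0,a)]" by (auto simp: fun_eq_iff)
  then show ?thesis using polyf_pev by metis
qed

lemma polyf_add: "polyf f \<Longrightarrow> polyf g \<Longrightarrow> polyf (\<lambda>c. f c + g c)"
proof -
  assume "polyf f" "polyf g"
  then obtain ps qs where "f = pev ps" "g = pev qs" unfolding polyf_def by blast
  then have "(\<lambda>c. f c + g c) = pev (ps @ qs)" by (simp add: fun_eq_iff)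
  then show ?thesis using polyf_pev by simp
qed

lemma lin_uminus: "lin scale uminus" by (simp add: lin_def scale_minus_right)

lemma polyf_uminus: "polyf f \<Longrightarrow> polyf (\<lambda>c. - f c)"
  using polyf_lin[OF lin_uminus] by blast

lemma polyf_diff: "polyf f \<Longrightarrow> polyf g \<Longrightarrow> polyf (\<lambda>c. f c - g c)"
  using polyf_add[of f "\<lambda>c. - g c"] polyf_uminus by simp

lemma pev_shift: "scale c (pev ps c) = pev (map (\<lambda>(k,v). (Suc k, v)) ps) c"
  by (induction ps) (auto simp: scale_right_distrib)

lemma polyf_shift: "polyf f \<Longrightarrow> polyf (\<lambda>c. scale c (f c))"
  unfolding polyf_def using pev_shift by fastforce

lemma polyf_shiftk: "polyf f \<Longrightarrow> polyf (\<lambda>c. scale (c^k) (f c))"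
proof (induction k)
  case 0 then show ?case by simp
next
  case (Suc k)
  have "polyf (\<lambda>c. scale c (scale (c^k) (f c)))" using polyf_shift[OF Suc.IH[OF Suc.prems]] .
  then show ?case by (simp add: mult.commute)
qed

lemma bilin_lin1: "bilin scale op \<Longrightarrow> lin scale (op x)" unfolding bilin_def by blast
lemma bilin_lin2: "bilin scale op \<Longrightarrow> lin scale (\<lambda>x. op x y)" unfolding bilin_def by blast

lemma polyf_bilin:
  assumes B: "bilin scale op" and f: "polyf f" and g: "polyf g"
  shows "polyf (\<lambda>c. op (f c) (g c))"
proof -
  obtain ps where ps: "f = pev ps" using f polyf_def by blast
  have "polyf (\<lambda>c. op (pev ps c) (g c))"
  proof (induction ps)
    case Nil
    have "op 0 y = 0" for y using lin_zero[OF bilin_lin2[OF B, of y]] .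
    then show ?case by (simp add: polyf_const)
  next
    case (Cons a ps)
    obtain k v where a: "a = (k,v)" by (cases a)
    have e: "op (pev (a#ps) c) (g c) = scale (c^k) (op v (g c)) + op (pev ps c) (g c)" for c
      using lin_add[OF bilin_lin2[OF B]] lin_scale[OF bilin_lin2[OF B]] by (simp add: a)
    have "polyf (\<lambda>c. scale (c^k) (op v (g c)))"
      by (rule polyf_shiftk, rule polyf_lin[OF bilin_lin1[OF B] g])
    then show ?case unfolding e using polyf_add Cons.IH by blast
  qed
  then show ?thesis using ps by simp
qed

lemma polyf_sq: "polyf f \<Longrightarrow> polyf (\<lambda>c. sq (f c))"
proof -
  assume f: "polyf f"
  obtain ps where ps: "f = pev ps" using f polyf_def by blast
  have "polyf (\<lambda>c. sq (pev ps c))"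
  proof (induction ps)
    case Nil then show ?case by (simp add: polyf_const)
  next
    case (Cons a ps)
    obtain k v where a: "a = (k,v)" by (cases a)
    have e: "sq (pev (a#ps) c) = scale (c^(k+k)) (sq v) + sq (pev ps c) + scale (c^k) (circ v (pev ps c))" for c
      by (simp add: a sq_sum sq_scale circ_scale power_add)
    have "polyf (\<lambda>c. scale (c^k) (circ v (pev ps c)))"
      by (rule polyf_shiftk, rule polyf_lin[OF bilin_lin1[OF bilin_circ] polyf_pev])
    moreover have "polyf (\<lambda>c. scale (c^(k+k)) (sq v))" by (rule polyf_shiftk, rule polyf_const)
    ultimately show ?case unfolding e using polyf_add Cons.IH by blast
  qed
  then show ?thesis using ps by simp
qed

lemma polyf_T: "polyf f \<Longrightarrow> polyf g \<Longrightarrow> polyf h \<Longrightarrow> polyf (\<lambda>c. T (f c) (g c) (h c))"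
proof -
  assume f: "polyf f" and g: "polyf g" and h: "polyf h"
  obtain ps where ps: "f = pev ps" using f polyf_def by blast
  have "polyf (\<lambda>c. T (pev ps c) (g c) (h c))"
  proof (induction ps)
    case Nil then show ?case by (simp add: polyf_const)
  next
    case (Cons a ps)
    obtain k v where a: "a = (k,v)" by (cases a)
    have e: "T (pev (a#ps) c) (g c) (h c) = scale (c^k) (T v (g c) (h c)) + T (pev ps c) (g c) (h c)" for c
      by (simp add: a T_add T_scale)
    have "polyf (\<lambda>c. scale (c^k) (T v (g c) (h c)))"
      by (rule polyf_shiftk, rule polyf_bilin[OF bilin_T g h])
    then show ?case unfolding e using polyf_add Cons.IH by blast
  qed
  then show ?thesis using ps by simp
qed

lemma polyf_Q: "polyf f \<Longrightarrow> polyf g \<Longrightarrow> polyf (\<lambda>c. Q (f c) (g c))"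
proof -
  assume f: "polyf f" and g: "polyf g"
  obtain ps where ps: "f = pev ps" using f polyf_def by blast
  have "polyf (\<lambda>c. Q (pev ps c) (g c))"
  proof (induction ps)
    case Nil then show ?case by (simp add: polyf_const)
  next
    case (Cons a ps)
    obtain k v where a: "a = (k,v)" by (cases a)
    have e: "Q (pev (a#ps) c) (g c) = scale (c^(k+k)) (Q v (g c)) + Q (pev ps c) (g c)
              + scale (c^k) (T v (g c) (pev ps c))" for c
      by (simp add: a Q_sum Q_scaleL T_scale power_add)
    have "polyf (\<lambda>c. scale (c^k) (T v (g c) (pev ps c)))"
      by (rule polyf_shiftk, rule polyf_bilin[OF bilin_T g polyf_pev])
    moreover have "polyf (\<lambda>c. scale (c^(k+k)) (Q v (g c)))"
      by (rule polyf_shiftk, rule polyf_lin[OF lin_Q g])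
    ultimately show ?case unfolding e using polyf_add Cons.IH by blast
  qed
  then show ?thesis using ps by simp
qed

lemma polyf_circ: "polyf f \<Longrightarrow> polyf g \<Longrightarrow> polyf (\<lambda>c. circ (f c) (g c))"
  by (rule polyf_bilin[OF bilin_circ])

definition polyN :: "nat \<Rightarrow> ('k \<Rightarrow> 'a) \<Rightarrow> bool" where
  "polyN N f \<longleftrightarrow> (\<exists>v. \<forall>c. f c = (\<Sum>i\<le>N. scale (c^i) (v i)))"

lemma polyN_zero: "polyN N (\<lambda>c. 0)"
  unfolding polyN_def by (rule exI[of _ "\<lambda>_. 0"]) simp

lemma polyN_add: "polyN N f \<Longrightarrow> polyN N g \<Longrightarrow> polyN N (\<lambda>c. f c + g c)"
proof -
  assume "polyN N f" "polyN N g"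
  then obtain v w where v: "\<forall>c. f c = (\<Sum>i\<le>N. scale (c^i) (v i))"
    and w: "\<forall>c. g c = (\<Sum>i\<le>N. scale (c^i) (w i))" unfolding polyN_def by blast
  have "\<forall>c. f c + g c = (\<Sum>i\<le>N. scale (c^i) (v i + w i))"
    using v w by (simp add: scale_right_distrib sum.distrib)
  then show ?thesis unfolding polyN_def by (intro exI[of _ "\<lambda>i. v i + w i"])
qed

lemma polyN_mono: "k \<le> N \<Longrightarrow> polyN N (\<lambda>c. scale (c^k) a)"
proof -
  assume k: "k \<le> N"
  have "\<forall>c. scale (c^k) a = (\<Sum>i\<le>N. scale (c^i) (if k = i then a else 0))"
  proof
    fix c
    have "(\<Sum>i\<le>N. scale (c^i) (if k = i then a else 0)) = (\<Sum>i\<le>N. (if k = i then scale (c^i) a else 0))"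
      by (rule sum.cong) auto
    also have "\<dots> = scale (c^k) a" using k by simp
    finally show "scale (c^k) a = (\<Sum>i\<le>N. scale (c^i) (if k = i then a else 0))" by simp
  qed
  then show ?thesis unfolding polyN_def by (intro exI[of _ "\<lambda>i. if k = i then a else 0"])
qed

lemma polyN_sum: "finite A \<Longrightarrow> (\<forall>i\<in>A. polyN N (F i)) \<Longrightarrow> polyN N (\<lambda>c. \<Sum>i\<in>A. F i c)"
proof (induction A rule: finite_induct)
  case empty then show ?case by (simp add: polyN_zero)
next
  case (insert x A)
  then show ?case using polyN_add[of N "F x" "\<lambda>c. \<Sum>i\<in>A. F i c"] by simp
qed

lemma polyN_pev: "(\<forall>p\<in>set ps. fst p \<le> N) \<Longrightarrow> polyN N (pev ps)"
proof (induction ps)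
  case Nil then show ?case using polyN_zero by (simp add: fun_eq_iff[symmetric] pev_def)
next
  case (Cons a ps)
  obtain k v where a: "a = (k,v)" by (cases a)
  have "polyN N (\<lambda>c. scale (c^k) v + pev ps c)"
    using polyN_add[OF polyN_mono Cons.IH] Cons.prems a by simp
  then show ?case by (simp add: a)
qed

lemma polyf_polyN: "polyf f \<Longrightarrow> \<exists>N. polyN N f"
proof -
  assume "polyf f"
  then obtain ps where ps: "f = pev ps" unfolding polyf_def by blast
  let ?N = "Max (insert 0 (fst ` set ps))"
  have "\<forall>p\<in>set ps. fst p \<le> ?N" by simp
  then show ?thesis using polyN_pev ps by blast
qed

lemma polyN_div:
  assumes "polyN (Suc N) f"
  shows "\<exists>g. polyN N g \<and> (\<forall>c. f c - f c0 = scale (c - c0) (g c))"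
proof -
  obtain v where v: "\<forall>c. f c = (\<Sum>i\<le>Suc N. scale (c^i) (v i))" using assms unfolding polyN_def by blast
  define g where "g c = (\<Sum>i\<le>Suc N. \<Sum>j<i. scale (c^j) (scale (c0^(i - Suc j)) (v i)))" for c
  have "polyN N g"
    unfolding g_def
    by (intro polyN_sum ballI finite_atMost finite_lessThan polyN_mono) auto
  moreover have "f c - f c0 = scale (c - c0) (g c)" for c
  proof -
    have "f c - f c0 = (\<Sum>i\<le>Suc N. scale (c^i - c0^i) (v i))"
      using v by (simp add: sum_subtractf scale_left_diff_distrib)
    also have "\<dots> = (\<Sum>i\<le>Suc N. scale (c - c0) (\<Sum>j<i. scale (c^j) (scale (c0^(i - Suc j)) (v i))))"
    proof (rule sum.cong[OF refl])
      fix i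
      have "scale (c^i - c0^i) (v i) = scale ((c - c0) * (\<Sum>j<i. c0^(i - Suc j) * c^j)) (v i)"
        by (simp add: power_diff_sumr2)
      also have "\<dots> = scale (c - c0) (\<Sum>j<i. scale (c0^(i - Suc j) * c^j) (v i))"
        by (simp only: scale_scale[symmetric] scale_sum_left)
      also have "\<dots> = scale (c - c0) (\<Sum>j<i. scale (c^j) (scale (c0^(i - Suc j)) (v i)))"
        by (simp add: mult.commute)
      finally show "scale (c^i - c0^i) (v i) = scale (c - c0) (\<Sum>j<i. scale (c^j) (scale (c0^(i - Suc j)) (v i)))" .
    qed
    also have "\<dots> = scale (c - c0) (g c)" by (simp only: g_def scale_sum_right)
    finally show ?thesis .
  qed
  ultimately show ?thesis by blast
qed

lemma polyN_vanish: "polyN N f \<Longrightarrow> infinite S \<Longrightarrow> \<forall>c\<in>S. f c = 0 \<Longrightarrow> f c = 0"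
proof (induction N arbitrary: f S c)
  case 0
  then obtain v where v: "\<forall>c. f c = scale (c^0) (v 0)" unfolding polyN_def by auto
  obtain c1 where "c1 \<in> S" using "0.prems"(2) using infinite_imp_nonempty by blast
  then have "v 0 = 0" using v "0.prems"(3) by auto
  then show ?case using v by simp
next
  case (Suc N)
  obtain c0 where c0: "c0 \<in> S" using Suc.prems(2) using infinite_imp_nonempty by blast
  obtain g where g: "polyN N g" "\<forall>c. f c - f c0 = scale (c - c0) (g c)" using polyN_div[OF Suc.prems(1)] by blast
  have fc0: "f c0 = 0" using c0 Suc.prems(3) by auto
  have "\<forall>c\<in>S - {c0}. g c = 0"
  proof
    fix c assume c: "c \<in> S - {c0}"
    then have "scale (c - c0) (g c) = 0" using g(2) fc0 Suc.prems(3) by (metis DiffD1 diff_zero)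
    then show "g c = 0" using c by auto
  qed
  moreover have "infinite (S - {c0})" using Suc.prems(2) by simp
  ultimately have "\<forall>c. g c = 0" using Suc.IH[OF g(1)] by blast
  then show ?case using g(2) fc0 by (metis diff_zero scale_zero_right)
qed

lemma polyf_vanish: "polyf f \<Longrightarrow> infinite S \<Longrightarrow> \<forall>c\<in>S. f c = 0 \<Longrightarrow> f c = 0"
  using polyf_polyN polyN_vanish by blast

lemma coeff1_zero:
  assumes Z: "polyf Z" and e: "\<forall>c. scale c X + scale (c*c) (Z c) = 0"
  shows "X = 0"
proof -
  have h: "polyf (\<lambda>c. X + scale c (Z c))" by (intro polyf_add polyf_const polyf_shift Z)
  have "\<forall>c\<in>UNIV - {0}. X + scale c (Z c) = 0"
  proof
    fix c :: 'k assume c: "c \<in> UNIV - {0}"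
    have "scale c (X + scale c (Z c)) = scale c X + scale (c*c) (Z c)" by (simp add: scale_right_distrib)
    then have "scale c (X + scale c (Z c)) = 0" using e by simp
    then show "X + scale c (Z c) = 0" using c by simp
  qed
  moreover have "infinite (UNIV - {0::'k})" using inf by simp
  ultimately have "X + scale 0 (Z 0) = 0" using polyf_vanish[OF h] by blast
  then show ?thesis by simp
qed

definition exp1 :: "('k \<Rightarrow> 'a) \<Rightarrow> 'a \<Rightarrow> 'a \<Rightarrow> bool" where
  "exp1 f A B \<longleftrightarrow> (\<exists>Y. polyf Y \<and> Y 0 = B \<and> (\<forall>c. f c = A + scale c (Y c)))"

lemma exp1I: "polyf Y \<Longrightarrow> Y 0 = B \<Longrightarrow> (\<And>c. f c = A + scale c (Y c)) \<Longrightarrow> exp1 f A B"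
  unfolding exp1_def by blast

lemma exp1_const: "exp1 (\<lambda>c. a) a 0"
  by (rule exp1I[of "\<lambda>c. 0"]) (simp_all add: polyf_const)

lemma exp1_id: "exp1 (\<lambda>c. x + scale c z) x z"
  by (rule exp1I[of "\<lambda>c. z"]) (simp_all add: polyf_const)

lemma exp1_polyf: "exp1 f A B \<Longrightarrow> polyf f"
proof -
  assume "exp1 f A B"
  then obtain Y where Y: "polyf Y" "\<forall>c. f c = A + scale c (Y c)" unfolding exp1_def by blast
  have "polyf (\<lambda>c. A + scale c (Y c))" by (intro polyf_add polyf_const polyf_shift Y(1))
  moreover have "f = (\<lambda>c. A + scale c (Y c))" using Y(2) by auto
  ultimately show ?thesis by simp
qed

lemma exp1_at0: "exp1 f A B \<Longrightarrow> f 0 = A"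
  unfolding exp1_def by auto

lemma exp1_add: "exp1 f A B \<Longrightarrow> exp1 g C D \<Longrightarrow> exp1 (\<lambda>c. f c + g c) (A + C) (B + D)"
proof -
  assume "exp1 f A B" "exp1 g C D"
  then obtain Y X where Y: "polyf Y" "Y 0 = B" "\<forall>c. f c = A + scale c (Y c)"
    and X: "polyf X" "X 0 = D" "\<forall>c. g c = C + scale c (X c)" unfolding exp1_def by blast
  show ?thesis
    by (rule exp1I[of "\<lambda>c. Y c + X c"]) (auto simp: polyf_add Y X scale_right_distrib)
qed

lemma exp1_lin: "lin scale L \<Longrightarrow> exp1 f A B \<Longrightarrow> exp1 (\<lambda>c. L (f c)) (L A) (L B)"
proof -
  assume L: "lin scale L" and "exp1 f A B"
  then obtain Y where Y: "polyf Y" "Y 0 = B" "\<forall>c. f c = A + scale c (Y c)" unfolding exp1_def by blast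
  show ?thesis
    by (rule exp1I[of "\<lambda>c. L (Y c)"]) (auto simp: polyf_lin[OF L] Y lin_add[OF L] lin_scale[OF L])
qed

lemma exp1_uminus: "exp1 f A B \<Longrightarrow> exp1 (\<lambda>c. - f c) (- A) (- B)"
  using exp1_lin[OF lin_uminus] by blast

lemma exp1_diff: "exp1 f A B \<Longrightarrow> exp1 g C D \<Longrightarrow> exp1 (\<lambda>c. f c - g c) (A - C) (B - D)"
  using exp1_add[of f A B "\<lambda>c. - g c" "- C" "- D"] exp1_uminus by simp

lemma exp1_unique: "exp1 f A B \<Longrightarrow> exp1 g A D \<Longrightarrow> (\<And>c. f c = g c) \<Longrightarrow> B = D"
proof -
  assume f: "exp1 f A B" and g: "exp1 g A D" and fg: "\<And>c. f c = g c"
  obtain Y where Y: "polyf Y" "Y 0 = B - D" "\<forall>c. f c - g c = (A - A) + scale c (Y c)"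
    using exp1_diff[OF f g] unfolding exp1_def by blast
  have "\<forall>c\<in>UNIV - {0}. Y c = 0"
  proof
    fix c :: 'k assume c: "c \<in> UNIV - {0}"
    have "scale c (Y c) = 0" using Y(3) fg by (metis diff_self add_0)
    then show "Y c = 0" using c by simp
  qed
  moreover have "infinite (UNIV - {0::'k})" using inf by simp
  ultimately have "Y 0 = 0" using polyf_vanish[OF Y(1)] by blast
  then show ?thesis using Y(2) by simp
qed

lemma exp1_sq: "exp1 f A B \<Longrightarrow> exp1 (\<lambda>c. sq (f c)) (sq A) (circ A B)"
proof -
  assume "exp1 f A B"
  then obtain Y where Y: "polyf Y" "Y 0 = B" "\<forall>c. f c = A + scale c (Y c)" unfolding exp1_def by blast
  show ?thesis
  proof (rule exp1I[of "\<lambda>c. circ A (Y c) + scale c (sq (Y c))"])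
    show "polyf (\<lambda>c. circ A (Y c) + scale c (sq (Y c)))"
      by (intro polyf_add polyf_shift polyf_sq polyf_circ polyf_const Y(1))
    show "circ A (Y 0) + scale 0 (sq (Y 0)) = circ A B" using Y(2) by simp
    fix c
    show "sq (f c) = sq A + scale c (circ A (Y c) + scale c (sq (Y c)))"
      using Y(3) by (simp add: sq_sum sq_scale circ_scale2 scale_right_distrib algebra_simps)
  qed
qed

lemma exp1_circ: "exp1 f A B \<Longrightarrow> exp1 g C D \<Longrightarrow> exp1 (\<lambda>c. circ (f c) (g c)) (circ A C) (circ B C + circ A D)"
proof -
  assume f: "exp1 f A B" and g: "exp1 g C D"
  then obtain Y X where Y: "polyf Y" "Y 0 = B" "\<forall>c. f c = A + scale c (Y c)"
    and X: "polyf X" "X 0 = D" "\<forall>c. g c = C + scale c (X c)" unfolding exp1_def by blast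
  have pg: "polyf g" using exp1_polyf[OF g] .
  have g0: "g 0 = C" using exp1_at0[OF g] .
  show ?thesis
  proof (rule exp1I[of "\<lambda>c. circ (Y c) (g c) + circ A (X c)"])
    show "polyf (\<lambda>c. circ (Y c) (g c) + circ A (X c))"
      by (intro polyf_add polyf_circ polyf_const Y(1) X(1) pg)
    show "circ (Y 0) (g 0) + circ A (X 0) = circ B C + circ A D" using Y(2) X(2) g0 by simp
    fix c
    show "circ (f c) (g c) = circ A C + scale c (circ (Y c) (g c) + circ A (X c))"
      using Y(3) X(3) by (simp add: circ_add circ_scale circ_add2 circ_scale2 scale_right_distrib algebra_simps)
  qed
qed

lemma exp1_T: "exp1 f A B \<Longrightarrow> exp1 g C D \<Longrightarrow> exp1 h E F \<Longrightarrow>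
   exp1 (\<lambda>c. T (f c) (g c) (h c)) (T A C E) (T B C E + T A D E + T A C F)"
proof -
  assume f: "exp1 f A B" and g: "exp1 g C D" and h: "exp1 h E F"
  then obtain Y X W where Y: "polyf Y" "Y 0 = B" "\<forall>c. f c = A + scale c (Y c)"
    and X: "polyf X" "X 0 = D" "\<forall>c. g c = C + scale c (X c)"
    and W: "polyf W" "W 0 = F" "\<forall>c. h c = E + scale c (W c)" unfolding exp1_def by blast
  have pg: "polyf g" using exp1_polyf[OF g] .
  have ph: "polyf h" using exp1_polyf[OF h] .
  show ?thesis
  proof (rule exp1I[of "\<lambda>c. T (Y c) (g c) (h c) + T A (X c) (h c) + T A C (W c)"])
    show "polyf (\<lambda>c. T (Y c) (g c) (h c) + T A (X c) (h c) + T A C (W c))"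
      by (intro polyf_add polyf_T polyf_const Y(1) X(1) W(1) pg ph)
    show "T (Y 0) (g 0) (h 0) + T A (X 0) (h 0) + T A C (W 0) = T B C E + T A D E + T A C F"
      using Y(2) X(2) W(2) exp1_at0[OF g] exp1_at0[OF h] by simp
    fix c
    show "T (f c) (g c) (h c) = T A C E + scale c (T (Y c) (g c) (h c) + T A (X c) (h c) + T A C (W c))"
      using Y(3) X(3) W(3) by (simp add: T_add T_add2 T_add3 T_scale T_scale2 T_scale3 scale_right_distrib algebra_simps)
  qed
qed

lemma exp1_Q: "exp1 f A B \<Longrightarrow> exp1 g C D \<Longrightarrow> exp1 (\<lambda>c. Q (f c) (g c)) (Q A C) (T A C B + Q A D)"
proof -
  assume f: "exp1 f A B" and g: "exp1 g C D"
  then obtain Y X where Y: "polyf Y" "Y 0 = B" "\<forall>c. f c = A + scale c (Y c)"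
    and X: "polyf X" "X 0 = D" "\<forall>c. g c = C + scale c (X c)" unfolding exp1_def by blast
  have pg: "polyf g" using exp1_polyf[OF g] .
  have g0: "g 0 = C" using exp1_at0[OF g] .
  show ?thesis
  proof (rule exp1I[of "\<lambda>c. T A (g c) (Y c) + Q A (X c) + scale c (Q (Y c) (g c))"])
    show "polyf (\<lambda>c. T A (g c) (Y c) + Q A (X c) + scale c (Q (Y c) (g c)))"
      by (intro polyf_add polyf_T polyf_Q polyf_shift polyf_const Y(1) X(1) pg)
    show "T A (g 0) (Y 0) + Q A (X 0) + scale 0 (Q (Y 0) (g 0)) = T A C B + Q A D"
      using Y(2) X(2) g0 by simp
    fix c
    have "Q (f c) (g c) = Q A (g c) + Q (scale c (Y c)) (g c) + T A (g c) (scale c (Y c))"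
      using Y(3) by (simp add: Q_sum)
    also have "\<dots> = Q A C + scale c (Q A (X c)) + scale (c*c) (Q (Y c) (g c)) + scale c (T A (g c) (Y c))"
    proof -
      have "Q A (g c) = Q A C + scale c (Q A (X c))" using X(3) by (simp add: Q_add Q_scaleR)
      then show ?thesis by (simp add: Q_scaleL T_scale3 del: scale_scale)
    qed
    also have "\<dots> = Q A C + scale c (T A (g c) (Y c) + Q A (X c) + scale c (Q (Y c) (g c)))"
      by (simp add: scale_right_distrib algebra_simps)
    finally show "Q (f c) (g c) = Q A C + scale c (T A (g c) (Y c) + Q A (X c) + scale c (Q (Y c) (g c)))" .
  qed
qed

lemma exp1_unique': "exp1 f A B \<Longrightarrow> exp1 g A' D \<Longrightarrow> A = A' \<Longrightarrow> (\<And>c. f c = g c) \<Longrightarrow> B = D"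
  using exp1_unique by blast

lemma lin1: "T z x y + T x z y = circ (circ x z) y"
proof -
  have e1: "exp1 (\<lambda>c. T (x + scale c z) (x + scale c z) y) (T x x y) (T z x y + T x z y + T x x 0)"
    by (intro exp1_T exp1_id exp1_const)
  have e2: "exp1 (\<lambda>c. circ (sq (x + scale c z)) y) (circ (sq x) y) (circ (circ x z) y + circ (sq x) 0)"
    by (intro exp1_circ exp1_sq exp1_id exp1_const)
  show ?thesis using exp1_unique'[OF e1 e2 M1 M1] by simp
qed

lemma lin2: "circ (T x y z) x + circ (Q x y) z = T x (circ y x) z + Q x (circ y z)"
proof -
  have e1: "exp1 (\<lambda>c. circ (Q (x + scale c z) y) (x + scale c z)) (circ (Q x y) x) (circ (T x y z + Q x 0) x + circ (Q x y) z)"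
    by (intro exp1_circ exp1_Q exp1_id exp1_const)
  have e2: "exp1 (\<lambda>c. Q (x + scale c z) (circ y (x + scale c z))) (Q x (circ y x)) (T x (circ y x) z + Q x (circ 0 x + circ y z))"
    by (intro exp1_circ exp1_Q exp1_id exp1_const)
  show ?thesis using exp1_unique'[OF e1 e2 M2 M2] by simp
qed

lemma lin3: "T x (sq x) z + Q x (circ x z) = circ (sq x) (circ x z)"
proof -
  have e1: "exp1 (\<lambda>c. Q (x + scale c z) (sq (x + scale c z))) (Q x (sq x)) (T x (sq x) z + Q x (circ x z))"
    by (intro exp1_Q exp1_sq exp1_id)
  have e2: "exp1 (\<lambda>c. sq (sq (x + scale c z))) (sq (sq x)) (circ (sq x) (circ x z))"
    by (intro exp1_sq exp1_id)
  show ?thesis using exp1_unique'[OF e1 e2 M3 M3] by simp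
qed

lemma lin4: "T x (Q y (sq x)) z + Q x (Q y (circ x z)) = circ (Q x y) (T x y z)"
proof -
  have e1: "exp1 (\<lambda>c. Q (x + scale c z) (Q y (sq (x + scale c z)))) (Q x (Q y (sq x)))
      (T x (Q y (sq x)) z + Q x (T y (sq x) 0 + Q y (circ x z)))"
    by (intro exp1_Q exp1_sq exp1_id exp1_const)
  have e2: "exp1 (\<lambda>c. sq (Q (x + scale c z) y)) (sq (Q x y)) (circ (Q x y) (T x y z + Q x 0))"
    by (intro exp1_sq exp1_Q exp1_id exp1_const)
  show ?thesis using exp1_unique'[OF e1 e2 M4 M4] by simp
qed

lemma lin5: "T (sq x) w (circ x z) = T x (Q x w) z + Q x (T x w z)"
proof -
  have e1: "exp1 (\<lambda>c. Q (sq (x + scale c z)) w) (Q (sq x) w) (T (sq x) w (circ x z) + Q (sq x) 0)"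
    by (intro exp1_Q exp1_sq exp1_id exp1_const)
  have e2: "exp1 (\<lambda>c. Q (x + scale c z) (Q (x + scale c z) w)) (Q x (Q x w)) (T x (Q x w) z + Q x (T x w z + Q x 0))"
    by (intro exp1_Q exp1_id exp1_const)
  show ?thesis using exp1_unique'[OF e1 e2 M5 M5] by simp
qed

lemma lin6: "T (Q x y) v (T x y z) = T x (Q y (Q x v)) z + Q x (Q y (T x v z))"
proof -
  have e1: "exp1 (\<lambda>c. Q (Q (x + scale c z) y) v) (Q (Q x y) v) (T (Q x y) v (T x y z + Q x 0) + Q (Q x y) 0)"
    by (intro exp1_Q exp1_id exp1_const)
  have e2: "exp1 (\<lambda>c. Q (x + scale c z) (Q y (Q (x + scale c z) v))) (Q x (Q y (Q x v)))
      (T x (Q y (Q x v)) z + Q x (T y (Q x v) 0 + Q y (T x v z + Q x 0)))"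
    by (intro exp1_Q exp1_id exp1_const)
  show ?thesis using exp1_unique'[OF e1 e2 M6 M6] by simp
qed

abbreviation pw where "pw k x \<equiv> jpow sq Q k x"

lemma jpow_0: "pw 0 x = x" by (simp add: jpow.simps)
lemma jpow_1: "pw (Suc 0) x = x" by (simp add: jpow.simps)
lemma jpow_even: "k \<ge> 1 \<Longrightarrow> pw (2*k) x = sq (pw k x)"
  by (subst jpow.simps) simp
lemma jpow_odd: "k \<ge> 1 \<Longrightarrow> pw (2*k+1) x = Q (pw k x) x"
  by (subst jpow.simps) simp

lemma lin_Upow: "lin scale (Q x ^^ j)"
  by (induction j) (simp_all add: lin_def lin_add[OF lin_Q] lin_scale[OF lin_Q])

lemma Upow_add: "(Q x ^^ j) (a + b) = (Q x ^^ j) a + (Q x ^^ j) b"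
  using lin_add[OF lin_Upow] .
lemma Upow_zero: "(Q x ^^ j) 0 = 0"
  using lin_zero[OF lin_Upow] .
lemma Upow_Suc: "(Q x ^^ Suc j) z = Q x ((Q x ^^ j) z)" by simp
lemma Upow_Suc': "(Q x ^^ Suc j) z = (Q x ^^ j) (Q x z)" by (simp only: funpow_Suc_right comp_def)
lemma Upow_comm: "(Q x ^^ j) (Q x z) = Q x ((Q x ^^ j) z)" using Upow_Suc' Upow_Suc by metis
lemma Upow_comb: "(Q x ^^ i) ((Q x ^^ j) z) = (Q x ^^ (i + j)) z" by (simp add: funpow_add)
lemma Upow_plus: "(Q x ^^ (i + j)) z = (Q x ^^ i) ((Q x ^^ j) z)" by (simp add: funpow_add)

lemma pw1: "k \<ge> 1 \<Longrightarrow> Q (pw k x) = Q x ^^ k"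
proof (induction k rule: less_induct)
  case (less k)
  show ?case
  proof (cases "k = 1")
    case True then show ?thesis using jpow_1 by simp
  next
    case False
    then have k2: "k \<ge> 2" using less.prems by simp
    show ?thesis
    proof (cases "even k")
      case True
      then obtain h where h: "k = 2*h" by blast
      then have h1: "h \<ge> 1" "h < k" using k2 by auto
      have "Q (pw k x) z = (Q x ^^ k) z" for z
      proof -
        have "Q (pw k x) z = Q (pw h x) (Q (pw h x) z)" using h h1 jpow_even M5 by simp
        also have "\<dots> = (Q x ^^ (h + h)) z" using less.IH[OF h1(2) h1(1)] by (simp add: funpow_add)
        finally show ?thesis using h by (simp add: mult_2)
      qed
      then show ?thesis by auto
    next
      case False
      then obtain h where h: "k = 2*h+1" using oddE by blast
      then have h1: "h \<ge> 1" "h < k" using k2 by auto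
      have "Q (pw k x) z = (Q x ^^ k) z" for z
      proof -
        have "Q (pw k x) z = Q (pw h x) (Q x (Q (pw h x) z))" using h h1 jpow_odd M6 by simp
        also have "\<dots> = (Q x ^^ (h + 1 + h)) z" using less.IH[OF h1(2) h1(1)] by (simp add: Upow_comm Upow_comb)
        finally show ?thesis using h by (simp add: ac_simps mult_2 mult_2_right)
      qed
      then show ?thesis by auto
    qed
  qed
qed

lemma pw_odd: "pw (2*k+1) x = (Q x ^^ k) x"
proof (cases "k = 0")
  case True then show ?thesis using jpow_1 by simp
next
  case False
  then show ?thesis using jpow_odd pw1 by simp
qed

lemma sqU: "sq ((Q x ^^ m) x) = (Q x ^^ (2*m)) (sq x)"
proof (induction m)
  case 0 then show ?case by simp
next
  case (Suc m)
  have "sq ((Q x ^^ Suc m) x) = Q x (Q ((Q x ^^ m) x) (sq x))" using M4 by simp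
  also have "Q ((Q x ^^ m) x) = Q x ^^ (2*m+1)" using pw1[of "2*m+1" x] pw_odd[of m x] by simp
  finally show ?case by (simp add: funpow_add)
qed

lemma pw_even: "pw (2*k+2) x = (Q x ^^ k) (sq x)"
proof (induction k rule: less_induct)
  case (less k)
  have e: "pw (2*k+2) x = sq (pw (k+1) x)" using jpow_even[of "k+1" x] by (simp add: algebra_simps)
  show ?case
  proof (cases "even k")
    case True
    then obtain m where m: "k = 2*m" by blast
    have "pw (k+1) x = (Q x ^^ m) x" using pw_odd[of m x] m by simp
    then show ?thesis using e sqU m by simp
  next
    case False
    then obtain h where h: "k = 2*h+1" using oddE by blast
    have "pw (k+1) x = sq (pw (h+1) x)" using jpow_even[of "h+1" x] h by (simp add: algebra_simps)
    then have "pw (2*k+2) x = Q (pw (h+1) x) (sq (pw (h+1) x))" using e M3 by simp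
    also have "\<dots> = (Q x ^^ (h+1)) (pw (2*h+2) x)"
      using pw1[of "h+1" x] jpow_even[of "h+1" x] by (simp add: algebra_simps)
    also have "pw (2*h+2) x = (Q x ^^ h) (sq x)" using less.IH[of h] h by simp
    finally show ?thesis using h by (simp add: Upow_comb ac_simps mult_2 mult_2_right)
  qed
qed

lemma pwU: "m \<ge> 1 \<Longrightarrow> (Q x ^^ j) (pw m x) = pw (2*j+m) x"
proof (cases "even m")
  case True
  assume "m \<ge> 1"
  then obtain k where k: "m = 2*k+2" 
  proof -
    from True obtain h where h: "m = 2*h" by blast
    with \<open>m \<ge> 1\<close> have "m = 2*(h-1)+2" by simp
    then show ?thesis using that by blast
  qed
  then show ?thesis using pw_even[of k x] pw_even[of "j+k" x] by (simp add: funpow_add algebra_simps)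
next
  case False
  then obtain k where k: "m = 2*k+1" using oddE by blast
  then show ?thesis using pw_odd[of k x] pw_odd[of "j+k" x] by (simp add: funpow_add algebra_simps)
qed

lemma Q_pw: "m \<ge> 1 \<Longrightarrow> Q x (pw m x) = pw (m+2) x"
  using pwU[where j=1] by simp

lemma scale2: "scale 2 v = v + v" using scale_left_distrib[of 1 1 v] by simp
lemma scale4: "scale 4 v = v + v + v + v"
  using scale_left_distrib[of 2 2 v] scale2 by (simp add: add.assoc)

lemma circ_self: "circ y y = sq y + sq y"
proof -
  have "sq (y + y) = scale 4 (sq y)" using sq_scale[of 2 y] scale2 by simp
  then have "sq y + sq y + circ y y = sq y + sq y + sq y + sq y"
    by (simp add: sq_sum scale4)
  then show ?thesis by simp
qed

lemma T_self: "T y m y = Q y m + Q y m"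
proof -
  have "Q (y + y) m = scale 4 (Q y m)" using Q_scaleL[of 2 y m] scale2 by simp
  then have "Q y m + Q y m + T y m y = Q y m + Q y m + Q y m + Q y m"
    by (simp add: Q_sum scale4)
  then show ?thesis by simp
qed

lemma circ_U: "circ ((Q x ^^ j) y) x = (Q x ^^ j) (circ y x)"
  by (induction j) (simp_all add: M2)

lemma pw_circ_x: "k \<ge> 1 \<Longrightarrow> circ (pw k x) x = pw (k+1) x + pw (k+1) x"
proof (cases "even k")
  case True
  assume "k \<ge> 1"
  then obtain j where j: "k = 2*j+2" 
  proof -
    from True obtain h where h: "k = 2*h" by blast
    with \<open>k \<ge> 1\<close> have "k = 2*(h-1)+2" by simp
    then show ?thesis using that by blast
  qed
  have "circ (pw k x) x = (Q x ^^ j) (circ (sq x) x)" using j pw_even circ_U by simp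
  also have "circ (sq x) x = Q x x + Q x x" using M1[of x x] T_self[of x x] by simp
  also have "(Q x ^^ j) (Q x x + Q x x) = pw (k+1) x + pw (k+1) x"
    using j Upow_add pw_odd[of "j+1" x] by (simp add: algebra_simps Upow_comm)
  finally show ?thesis .
next
  case False
  then obtain j where j: "k = 2*j+1" using oddE by blast
  have "circ (pw k x) x = (Q x ^^ j) (circ x x)" using j pw_odd circ_U by simp
  also have "\<dots> = pw (k+1) x + pw (k+1) x" using j Upow_add circ_self pw_even[of j x] by (simp add: algebra_simps)
  finally show ?thesis .
qed



abbreviation LL where "LL x \<equiv> Lc (circ x) (Q x)"

lemma addh_circ: "addh (circ x)" by (simp add: addh_def circ_add2)
lemma addh_Qx: "addh (Q x)" by (simp add: addh_def Q_add)
lemma circ_Q_comm: "circ x (Q x z) = Q x (circ x z)"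
  using M2[of x z] circ_comm[of x "Q x z"] circ_comm[of x z] by simp

lemma LL_add: "LL x m (a + b) = LL x m a + LL x m b"
  using Lc_add[where V="circ x" and U="Q x", OF addh_circ addh_Qx circ_Q_comm] .
lemma LL_diff: "LL x m (a - b) = LL x m a - LL x m b"
  using addh_diff[OF addh_Lc[where V="circ x" and U="Q x", OF addh_circ addh_Qx circ_Q_comm]] .
lemma LL_V: "LL x m (circ x z) = circ x (LL x m z)"
  using Lc_V[where V="circ x" and U="Q x", OF addh_circ addh_Qx circ_Q_comm] .
lemma LL_Lucas: "LL x (b + m) (LL x b z) = LL x (2*b + m) z + (Q x ^^ b) (LL x m z)"
  using Lucas[where V="circ x" and U="Q x", OF addh_circ addh_Qx circ_Q_comm] .

lemma V2: "circ (sq x) w = LL x 2 w"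
proof -
  have "T w x x + T x w x = circ (circ x w) x" by (rule lin1)
  moreover have "T w x x = circ (sq x) w" using T_comm[of w x x] M1[of x w] by simp
  moreover have "circ (circ x w) x = circ x (circ x w)" by (rule circ_comm)
  ultimately have "circ (sq x) w + (Q x w + Q x w) = circ x (circ x w)"
    using T_self[of x w] by simp
  then have h1: "circ (sq x) w = circ x (circ x w) - (Q x w + Q x w)" by (simp add: eq_diff_eq)
  have "LL x 2 w = circ x (circ x w) - Q x (w + w)"
    using Lc_SS[of "circ x" "Q x" 0 w] by (simp add: numeral_2_eq_2)
  then show ?thesis using h1 by (simp add: Q_add)
qed

lemma pw_1: "pw 1 x = x" using jpow_1 by simp
lemma pw_2: "pw 2 x = sq x" using jpow_even[of 1 x] pw_1 by simp

lemma fa: "m \<ge> 1 \<Longrightarrow> T x (pw m x) w + T (pw m x) x w = circ (pw (m+1) x) w + circ (pw (m+1) x) w"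
proof -
  assume m: "m \<ge> 1"
  have "T (pw m x) x w + T x (pw m x) w = circ (circ x (pw m x)) w" using lin1[of "pw m x" x w] .
  moreover have "circ x (pw m x) = pw (m+1) x + pw (m+1) x" using pw_circ_x[OF m] circ_comm[of x "pw m x"] by simp
  ultimately show ?thesis by (simp add: circ_add add.commute)
qed

lemma fb: "k \<ge> 2 \<Longrightarrow> circ x (T x (pw (k-1) x) w) + circ (pw (k+1) x) w
    = T x (pw k x) w + T x (pw k x) w + Q x (circ (pw (k-1) x) w)"
proof -
  assume k: "k \<ge> 2"
  have e: "circ (T x (pw (k-1) x) w) x + circ (Q x (pw (k-1) x)) w
      = T x (circ (pw (k-1) x) x) w + Q x (circ (pw (k-1) x) w)" using lin2 .
  have "Q x (pw (k-1) x) = pw (k+1) x" using Q_pw[of "k-1" x] k by simp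
  moreover have "circ (pw (k-1) x) x = pw k x + pw k x" using pw_circ_x[of "k-1" x] k by simp
  moreover have "circ (T x (pw (k-1) x) w) x = circ x (T x (pw (k-1) x) w)" by (rule circ_comm)
  ultimately show ?thesis using e T_add2 by simp
qed

lemma jordan_main:
  "k \<ge> 1 \<Longrightarrow> (\<forall>w. T x (pw k x) w = LL x (k+1) w) \<and> (\<forall>w. circ (pw (k+1) x) w = LL x (k+1) w)"
proof (induction k rule: less_induct)
  case (less k)
  have Vm: "circ (pw m x) w = LL x m w" if m: "1 \<le> m" "m \<le> k" for m w
  proof (cases "m = 1")
    case True then show ?thesis using pw_1 by simp
  next
    case False then have "m - 1 < k" "1 \<le> m - 1" using m by auto
    then have "circ (pw (m-1+1) x) w = LL x (m-1+1) w" using less.IH by blast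
    then show ?thesis using m by simp
  qed
  have Wm: "T x (pw m x) w = LL x (m+1) w" if "1 \<le> m" "m < k" for m w using less.IH that by blast
  have VX: "T (pw m x) x w = LL x (m+1) w" if "1 \<le> m" "m + 1 \<le> k" for m w
  proof -
    have "T x (pw m x) w + T (pw m x) x w = LL x (m+1) w + LL x (m+1) w"
      using fa[of m x w] Vm[of "m+1" w] that by simp
    then show ?thesis using Wm[of m w] that by simp
  qed
  have W: "T x (pw k x) w = LL x (k+1) w" for w
  proof -
    have cases: "k = 1 \<or> k = 2 \<or> k = 3 \<or> (\<exists>j. j \<ge> 1 \<and> k = 2*j+2) \<or> (\<exists>j. j \<ge> 1 \<and> k = 2*j+3)"
    proof -
      have "k \<ge> 4 \<Longrightarrow> (\<exists>j. j \<ge> 1 \<and> k = 2*j+2) \<or> (\<exists>j. j \<ge> 1 \<and> k = 2*j+3)"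
      proof -
        assume k4: "k \<ge> 4"
        show ?thesis
        proof (cases "even k")
          case True then obtain h where "k = 2*h" by blast
          then have "k = 2*(h-1)+2" "h - 1 \<ge> 1" using k4 by auto
          then show ?thesis by blast
        next
          case False then obtain h where "k = 2*h+1" using oddE by blast
          then have "k = 2*(h-1)+3" "h - 1 \<ge> 1" using k4 by auto
          then show ?thesis by blast
        qed
      qed
      moreover have "k < 4 \<Longrightarrow> k = 1 \<or> k = 2 \<or> k = 3" using less.prems by presburger
      ultimately show ?thesis by (cases "k \<ge> 4") auto
    qed
    moreover
    {
      assume k: "k = 1"
      have "T x (pw k x) w = circ (sq x) w" using k pw_1 M1 by simp
      then have "T x (pw k x) w = LL x (k+1) w" using V2 k by (simp add: numeral_2_eq_2)
    }
    moreover
    {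
      assume k: "k = 2"
      have "T x (sq x) w = circ (sq x) (circ x w) - Q x (circ x w)" using lin3[of x w] by (simp add: eq_diff_eq)
      also have "\<dots> = LL x 2 (circ x w) - Q x (LL x 1 w)" using V2 by simp
      also have "\<dots> = LL x 3 w" using Lc_SS[of "circ x" "Q x" 1 w] by (simp add: eval_nat_numeral)
      finally have "T x (pw k x) w = LL x (k+1) w" using k pw_2 by simp
    }
    moreover
    {
      assume k: "k = 3"
      have e: "T (sq x) x (circ x w) = T x (Q x x) w + Q x (T x x w)" using lin5[of x x w] .
      have "Q x x = pw 3 x" using pw_odd[of 1 x] by simp
      moreover have "T (sq x) x (circ x w) = LL x 3 (circ x w)" using VX[of 2 "circ x w"] k pw_2 by simp
      moreover have "T x x w = LL x 2 w"
      proof -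
        have "T x (pw 1 x) w = LL x (1+1) w" by (rule Wm) (use k in auto)
        then show ?thesis by (simp only: pw_1 one_add_one)
      qed
      ultimately have "T x (pw 3 x) w = LL x 3 (circ x w) - Q x (LL x 2 w)" using e by (simp add: eq_diff_eq)
      also have "\<dots> = LL x 4 w" using Lc_SS[of "circ x" "Q x" 2 w] by (simp add: eval_nat_numeral)
      finally have "T x (pw k x) w = LL x (k+1) w" using k by simp
    }
    moreover
    {
      fix j assume j: "j \<ge> 1" "k = 2*j+2"
      have e: "T x (Q (pw j x) (sq x)) w + Q x (Q (pw j x) (circ x w)) = circ (Q x (pw j x)) (T x (pw j x) w)"
        using lin4 .
      have q: "Q (pw j x) = Q x ^^ j" using pw1 j by simp
      have "Q (pw j x) (sq x) = pw k x" using q pw_even[of j x] j by simp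
      moreover have "Q x (pw j x) = pw (j+2) x" using Q_pw[of j x] j by simp
      moreover have "circ (pw (j+2) x) (T x (pw j x) w) = LL x (j+2) (LL x (j+1) w)"
        using Vm[of "j+2"] Wm[of j w] j by simp
      moreover have "Q x (Q (pw j x) (circ x w)) = (Q x ^^ (j+1)) (LL x 1 w)" using q by simp
      ultimately have "T x (pw k x) w = LL x (j+2) (LL x (j+1) w) - (Q x ^^ (j+1)) (LL x 1 w)"
        using e by (simp add: eq_diff_eq)
      also have "\<dots> = LL x (k+1) w" using LL_Lucas[of x "j+1" 1 w] j by (simp add: algebra_simps)
      finally have "T x (pw k x) w = LL x (k+1) w" .
    }
    moreover
    {
      fix j assume j: "j \<ge> 1" "k = 2*j+3"
      have e: "T (Q x (pw j x)) x (T x (pw j x) w) = T x (Q (pw j x) (Q x x)) w + Q x (Q (pw j x) (T x x w))"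
        using lin6 .
      have q: "Q (pw j x) = Q x ^^ j" using pw1 j by simp
      have "Q (pw j x) (Q x x) = pw k x" using q pwU[where m=3 and x=x and j=j] pw_odd[of 1 x] j by simp
      moreover have "Q x (pw j x) = pw (j+2) x" using Q_pw[of j x] j by simp
      moreover have "T (pw (j+2) x) x (T x (pw j x) w) = LL x (j+3) (LL x (j+1) w)"
      proof -
        have v: "T (pw (j+2) x) x v = LL x (j+2+1) v" for v by (rule VX) (use j in auto)
        have wj: "T x (pw j x) w = LL x (j+1) w" by (rule Wm) (use j in auto)
        have i: "j+2+1 = j+3" by simp
        show ?thesis by (simp only: v wj i)
      qed
      moreover have "Q x (Q (pw j x) (T x x w)) = (Q x ^^ (j+1)) (LL x 2 w)"
      proof -
        have "T x (pw 1 x) w = LL x (1+1) w" by (rule Wm) (use j in auto)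
        then have "T x x w = LL x 2 w" by (simp only: pw_1 one_add_one)
        then show ?thesis using q by simp
      qed
      ultimately have "T x (pw k x) w = LL x (j+3) (LL x (j+1) w) - (Q x ^^ (j+1)) (LL x 2 w)"
        using e by (simp add: eq_diff_eq)
      also have "\<dots> = LL x (k+1) w"
      proof -
        have L: "LL x (j+1+2) (LL x (j+1) w) = LL x (2*(j+1)+2) w + (Q x ^^ (j+1)) (LL x 2 w)" by (rule LL_Lucas)
        have i1: "j+1+2 = j+3" by simp
        have i2: "2*(j+1)+2 = k+1" using j by simp
        show ?thesis using L unfolding i1 i2 by (simp only: add_diff_cancel)
      qed
      finally have "T x (pw k x) w = LL x (k+1) w" .
    }
    ultimately show ?thesis by blast
  qed
  have V: "circ (pw (k+1) x) w = LL x (k+1) w" for w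
  proof (cases "k = 1")
    case True then show ?thesis by (simp only: True one_add_one pw_2 V2)
  next
    case False
    then have k2: "k \<ge> 2" using less.prems by simp
    have e: "circ x (T x (pw (k-1) x) w) + circ (pw (k+1) x) w
      = T x (pw k x) w + T x (pw k x) w + Q x (circ (pw (k-1) x) w)" using fb[OF k2] .
    have "T x (pw (k-1) x) w = LL x k w" using Wm[of "k-1" w] k2 by simp
    moreover have "circ (pw (k-1) x) w = LL x (k-1) w" using Vm[of "k-1" w] k2 by simp
    moreover have "LL x (k+1) w = LL x k (circ x w) - Q x (LL x (k-1) w)"
      using Lc_SS[of "circ x" "Q x" "k-1" w] k2 by (simp add: Suc_diff_le)
    ultimately show ?thesis using e W[of w] LL_V by (simp add: algebra_simps)
  qed
  show ?case using W V by blast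
qed


lemma key: "n \<ge> 2 \<Longrightarrow> pw n x = 0 \<Longrightarrow> T (pw (n-1) x) x w = 0"
proof -
  assume n: "n \<ge> 2" and z: "pw n x = 0"
  have jm: "(\<forall>w. T x (pw (n-1) x) w = LL x (n-1+1) w) \<and> (\<forall>w. circ (pw (n-1+1) x) w = LL x (n-1+1) w)"
    using jordan_main[of "n-1" x] n by simp
  have nn: "n - 1 + 1 = n" using n by simp
  have "LL x n w = 0" using jm z unfolding nn by (metis circ_zeroL)
  then have "T x (pw (n-1) x) w = 0" using jm unfolding nn by simp
  moreover have "T x (pw (n-1) x) w + T (pw (n-1) x) x w = circ (pw (n-1+1) x) w + circ (pw (n-1+1) x) w"
    using fa[of "n-1" x w] n by simp
  ultimately show ?thesis using z unfolding nn by simp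
qed

lemma pw_exp1: "\<exists>B. exp1 (\<lambda>c. pw m (a + scale c b)) (pw m a) B"
proof (induction m rule: less_induct)
  case (less m)
  show ?case
  proof (cases "m \<le> 1")
    case True
    then have "\<And>y. pw m y = y" by (subst jpow.simps) simp
    then show ?thesis using exp1_id by auto
  next
    case False
    then have lt: "m div 2 < m" by simp
    obtain B where B: "exp1 (\<lambda>c. pw (m div 2) (a + scale c b)) (pw (m div 2) a) B" using less.IH[OF lt] by blast
    show ?thesis
    proof (cases "even m")
      case True
      then have "\<And>y. pw m y = sq (pw (m div 2) y)" using False by (subst jpow.simps) simp
      then show ?thesis using exp1_sq[OF B] by auto
    next
      case odd: False
      then have "\<And>y. pw m y = Q (pw (m div 2) y) y" using False by (subst jpow.simps) simp
      then show ?thesis using exp1_Q[OF B exp1_id] by auto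
    qed
  qed
qed

lemma part2: "n \<ge> 2 \<Longrightarrow> (\<forall>y. pw n y = 0) \<Longrightarrow> (\<forall>y. pw (2*n-1) y = 0) \<Longrightarrow> Q (pw (n-1) a) b = 0"
proof -
  assume n: "n \<ge> 2" and z: "\<forall>y. pw n y = 0" and z2: "\<forall>y. pw (2*n-1) y = 0"
  define m where "m = n - 1"
  have m1: "m \<ge> 1" using n m_def by simp
  have mm: "2*n - 1 = 2*m+1" using n m_def by simp
  have od: "\<And>y. pw (2*n-1) y = Q (pw m y) y" unfolding mm using jpow_odd[OF m1] by simp
  obtain B' where B': "exp1 (\<lambda>c. pw m (a + scale c b)) (pw m a) B'" using pw_exp1 by blast
  have e1: "exp1 (\<lambda>c. Q (pw m (a + scale c b)) (a + scale c b)) (Q (pw m a) a) (T (pw m a) a B' + Q (pw m a) b)"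
    by (rule exp1_Q[OF B' exp1_id])
  have e2: "exp1 (\<lambda>c. 0) 0 0" by (rule exp1_const)
  have "T (pw m a) a B' + Q (pw m a) b = 0"
    using exp1_unique'[OF e1 e2] od z2 by simp
  moreover have "T (pw m a) a B' = 0" using key[OF n z[rule_format, of a]] m_def by simp
  ultimately show ?thesis using m_def by simp
qed

lemma part1: "n \<ge> 2 \<Longrightarrow> pw n a = 0 \<Longrightarrow> n + 1 \<le> k \<Longrightarrow> Q (pw k a) b = 0"
proof -
  assume n: "n \<ge> 2" and z: "pw n a = 0" and k: "n + 1 \<le> k"
  have "Q (pw k a) b = (Q a ^^ (k - n + n)) b" using pw1[of k a] k by simp
  also have "\<dots> = (Q a ^^ (k - n)) ((Q a ^^ n) b)" by (simp add: funpow_add)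
  also have "(Q a ^^ n) b = Q (pw n a) b" using pw1[of n a] n by simp
  also have "\<dots> = 0" using z by simp
  finally show ?thesis by (simp add: Upow_zero)
qed

end

lemma lin_facts: "Vector_Spaces.linear s s f \<Longrightarrow> f (a + b) = f a + f b \<and> f (s c a) = s c (f a)"
  using module_hom_iff_linear[of s s f] unfolding module_hom_def module_hom_axioms_def by blast

lemma qja_from:
  assumes "quad_jordan scale sq Q" and "infinite (UNIV :: 'k set)"
  shows "qja (scale :: 'k::field \<Rightarrow> 'a::ab_group_add \<Rightarrow> 'a) sq Q"
proof -
  have vs: "vector_space scale" and qs: "quadratic_map scale scale sq"
    and lQ: "\<And>x. Vector_Spaces.linear scale scale (Q x)"
    and qQ: "\<And>y. quadratic_map scale scale (\<lambda>x. Q x y)"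
    and m1: "\<And>x y. jtriple Q x x y = jcirc sq (sq x) y"
    and m2: "\<And>x y. jcirc sq (Q x y) x = Q x (jcirc sq y x)"
    and m3: "\<And>x. Q x (sq x) = sq (sq x)"
    and m4: "\<And>x y. Q x (Q y (sq x)) = sq (Q x y)"
    and m5: "\<And>x z. Q (sq x) z = Q x (Q x z)"
    and m6: "\<And>x y z. Q (Q x y) z = Q x (Q y (Q x z))"
    using assms(1) unfolding quad_jordan_def by auto
  have qs1: "\<And>c x. sq (scale c x) = scale (c*c) (sq x)"
    and qs3: "\<And>y. Vector_Spaces.linear scale scale (\<lambda>x. sq (x + y) - sq x - sq y)"
    using qs unfolding quadratic_map_def by auto
  have qQ1: "\<And>y c x. Q (scale c x) y = scale (c*c) (Q x y)"
    and qQ3: "\<And>m z. Vector_Spaces.linear scale scale (\<lambda>x. Q (x + z) m - Q x m - Q z m)"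
    using qQ unfolding quadratic_map_def by auto
  show ?thesis
  proof (unfold_locales)
    show "\<And>a x y. scale a (x + y) = scale a x + scale a y" using vs vector_space.vector_space_assms(1) by blast
    show "\<And>a b x. scale (a + b) x = scale a x + scale b x" using vs vector_space.vector_space_assms(2) by blast
    show "\<And>a b x. scale a (scale b x) = scale (a * b) x" using vs vector_space.vector_space_assms(3) by blast
    show "\<And>x. scale 1 x = x" using vs vector_space.vector_space_assms(4) by blast
    show "\<And>c x. sq (scale c x) = scale (c * c) (sq x)" by (rule qs1)
    show "\<And>x y z. jcirc sq (x + y) z = jcirc sq x z + jcirc sq y z"
      unfolding jcirc_def using lin_facts[OF qs3] by blast
    show "\<And>c x z. jcirc sq (scale c x) z = scale c (jcirc sq x z)"
      unfolding jcirc_def using lin_facts[OF qs3] by blast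
    show "\<And>x y z. Q x (y + z) = Q x y + Q x z" using lin_facts[OF lQ] by blast
    show "\<And>x c y. Q x (scale c y) = scale c (Q x y)" using lin_facts[OF lQ] by blast
    show "\<And>c x y. Q (scale c x) y = scale (c * c) (Q x y)" by (rule qQ1)
    show "\<And>x y m z. jtriple Q (x + y) m z = jtriple Q x m z + jtriple Q y m z"
      unfolding jtriple_def using lin_facts[OF qQ3] by blast
    show "\<And>c x m z. jtriple Q (scale c x) m z = scale c (jtriple Q x m z)"
      unfolding jtriple_def using lin_facts[OF qQ3] by blast
  qed (use m1 m2 m3 m4 m5 m6 assms(2) in auto)
qed

theorem lemma17:
  fixes scale :: "'k::field \<Rightarrow> 'a::ab_group_add \<Rightarrow> 'a"
    and sq :: "'a \<Rightarrow> 'a" and Q :: "'a \<Rightarrow> 'a \<Rightarrow> 'a" and n :: nat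
  assumes "quad_jordan scale sq Q"
    and "infinite (UNIV :: 'k set)"
    and "n \<ge> 2"
    and "\<forall>x. jpow sq Q n x = 0"
  shows "(\<forall>a. \<forall>k \<in> {n+1..2*n-1}. abs_zero_divisor Q (jpow sq Q k a))
       \<and> ((\<forall>x. \<forall>k \<in> {n..2*n-1}. jpow sq Q k x = 0)
           \<longrightarrow> (\<forall>a. abs_zero_divisor Q (jpow sq Q (n-1) a)))"
proof -
  interpret qja scale sq Q using qja_from[OF assms(1,2)] .
  have A: "\<forall>a. \<forall>k \<in> {n+1..2*n-1}. abs_zero_divisor Q (jpow sq Q k a)"
    unfolding abs_zero_divisor_def using part1[OF assms(3)] assms(4) by (auto simp: fun_eq_iff)
  have B: "(\<forall>x. \<forall>k \<in> {n..2*n-1}. jpow sq Q k x = 0) \<longrightarrow> (\<forall>a. abs_zero_divisor Q (jpow sq Q (n-1) a))"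
  proof (intro impI allI)
    fix a
    assume h: "\<forall>x. \<forall>k \<in> {n..2*n-1}. jpow sq Q k x = 0"
    have "\<forall>y. jpow sq Q (2*n-1) y = 0" using h assms(3) by auto
    then show "abs_zero_divisor Q (jpow sq Q (n-1) a)"
      unfolding abs_zero_divisor_def using part2[OF assms(3) assms(4)] by (auto simp: fun_eq_iff)
  qed
  show ?thesis using A B by blast
qed

end
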